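(* Let $G$ be a connected graph with at least $5$ vertices and let $H$ be a connected component of the complement $\overline{G}$ such that $H$ is isomorphic to the cycle $C_4$. Then no vertex of $H$ is a basis forced vertex of $G$.
   Context: All graphs are finite and simple. $\overline{G}$ denotes the complement graph. For vertices $u,v$ of a connected graph $G$, $d(u,v)$ is the length of a shortest $u$–$v$ path. A set $R\subseteq V(G)$ is a resolving set if for all distinct $x,y\in V(G)$ there is $r\in R$ with $d(r,x)\neq d(r,y)$. The metric dimension $\dim(G)$ is the minimum cardinality of a resolving set, and a resolving set of cardinality $\dim(G)$ is a metric basis. A vertex is a basis forced vertex if it belongs to every metric basis of $G$. *)

theory Defs
  imports Main
begin

definition simple_graph :: "'a set \<Rightarrow> ('a \<Rightarrow> 'a \<Rightarrow> bool) \<Rightarrow> bool" where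
  "simple_graph V E \<longleftrightarrow> finite V \<and> (\<forall>u v. E u v \<longrightarrow> u \<in> V \<and> v \<in> V)
     \<and> (\<forall>u v. E u v \<longrightarrow> E v u) \<and> (\<forall>u. \<not> E u u)"

definition is_walk :: "'a set \<Rightarrow> ('a \<Rightarrow> 'a \<Rightarrow> bool) \<Rightarrow> 'a list \<Rightarrow> bool" where
  "is_walk V E xs \<longleftrightarrow> xs \<noteq> [] \<and> set xs \<subseteq> V \<and> (\<forall>i. Suc i < length xs \<longrightarrow> E (xs ! i) (xs ! Suc i))"

definition connected_graph :: "'a set \<Rightarrow> ('a \<Rightarrow> 'a \<Rightarrow> bool) \<Rightarrow> bool" where
  "connected_graph V E \<longleftrightarrow> V \<noteq> {} \<and>
     (\<forall>u\<in>V. \<forall>v\<in>V. \<exists>xs. is_walk V E xs \<and> hd xs = u \<and> last xs = v)"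

text \<open>Distance: length (number of edges) of a shortest walk.\<close>
definition gdist :: "'a set \<Rightarrow> ('a \<Rightarrow> 'a \<Rightarrow> bool) \<Rightarrow> 'a \<Rightarrow> 'a \<Rightarrow> nat" where
  "gdist V E u v = (LEAST n. \<exists>xs. is_walk V E xs \<and> hd xs = u \<and> last xs = v \<and> length xs = Suc n)"

definition resolving_set :: "'a set \<Rightarrow> ('a \<Rightarrow> 'a \<Rightarrow> bool) \<Rightarrow> 'a set \<Rightarrow> bool" where
  "resolving_set V E R \<longleftrightarrow> R \<subseteq> V \<and>
     (\<forall>x\<in>V. \<forall>y\<in>V. x \<noteq> y \<longrightarrow> (\<exists>r\<in>R. gdist V E r x \<noteq> gdist V E r y))"

definition metric_dim :: "'a set \<Rightarrow> ('a \<Rightarrow> 'a \<Rightarrow> bool) \<Rightarrow> nat" where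
  "metric_dim V E = (LEAST k. \<exists>R. resolving_set V E R \<and> card R = k)"

definition metric_basis :: "'a set \<Rightarrow> ('a \<Rightarrow> 'a \<Rightarrow> bool) \<Rightarrow> 'a set \<Rightarrow> bool" where
  "metric_basis V E R \<longleftrightarrow> resolving_set V E R \<and> card R = metric_dim V E"

definition basis_forced :: "'a set \<Rightarrow> ('a \<Rightarrow> 'a \<Rightarrow> bool) \<Rightarrow> 'a \<Rightarrow> bool" where
  "basis_forced V E v \<longleftrightarrow> (\<forall>R. metric_basis V E R \<longrightarrow> v \<in> R)"

definition compl_edges :: "'a set \<Rightarrow> ('a \<Rightarrow> 'a \<Rightarrow> bool) \<Rightarrow> 'a \<Rightarrow> 'a \<Rightarrow> bool" where
  "compl_edges V E u v \<longleftrightarrow> u \<in> V \<and> v \<in> V \<and> u \<noteq> v \<and> \<not> E u v"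

definition induced :: "('a \<Rightarrow> 'a \<Rightarrow> bool) \<Rightarrow> 'a set \<Rightarrow> 'a \<Rightarrow> 'a \<Rightarrow> bool" where
  "induced E C u v \<longleftrightarrow> u \<in> C \<and> v \<in> C \<and> E u v"

definition component :: "'a set \<Rightarrow> ('a \<Rightarrow> 'a \<Rightarrow> bool) \<Rightarrow> 'a set \<Rightarrow> bool" where
  "component V E C \<longleftrightarrow> C \<subseteq> V \<and> connected_graph C (induced E C) \<and>
     (\<forall>u v. u \<in> C \<longrightarrow> E u v \<longrightarrow> v \<in> C)"

definition C4_edges :: "nat \<Rightarrow> nat \<Rightarrow> bool" where
  "C4_edges i j \<longleftrightarrow> i < 4 \<and> j < 4 \<and> (j = (i + 1) mod 4 \<or> i = (j + 1) mod 4)"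

definition graph_iso :: "'a set \<Rightarrow> ('a \<Rightarrow> 'a \<Rightarrow> bool) \<Rightarrow> 'b set \<Rightarrow> ('b \<Rightarrow> 'b \<Rightarrow> bool) \<Rightarrow> bool" where
  "graph_iso V E W F \<longleftrightarrow> (\<exists>f. bij_betw f V W \<and> (\<forall>u\<in>V. \<forall>v\<in>V. E u v \<longleftrightarrow> F (f u) (f v)))"

end

theory Submission imports Defs begin

definition dd :: "('a \<Rightarrow> 'a \<Rightarrow> bool) \<Rightarrow> 'a \<Rightarrow> 'a \<Rightarrow> nat" where
  "dd E x y = (if x = y then 0 else if E x y then 1 else 2)"

lemma walk1: "length xs = Suc 0 \<Longrightarrow> hd xs = last xs"
  by (cases xs) auto

lemma walk2: assumes "is_walk V E xs" "length xs = Suc (Suc 0)"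
  shows "E (hd xs) (last xs)"
proof -
  obtain p q where xs: "xs = [p, q]" using assms(2)
    by (auto simp: length_Suc_conv)
  have "E (xs ! 0) (xs ! Suc 0)" using assms(1) xs unfolding is_walk_def by auto
  then show ?thesis using xs by simp
qed

lemma gdist_char:
  assumes sg: "simple_graph V E" and xy: "x \<in> V" "y \<in> V"
    and cn: "\<forall>x\<in>V. \<forall>y\<in>V. x \<noteq> y \<longrightarrow> \<not> E x y \<longrightarrow> (\<exists>z. E x z \<and> E z y)"
  shows "gdist V E x y = dd E x y"
proof (cases "x = y")
  case True
  have "is_walk V E [x]" using xy by (simp add: is_walk_def)
  then show ?thesis unfolding gdist_def dd_def using True
    by (intro Least_eq_0[THEN trans]) (auto intro!: exI[of _ "[x]"])
next
  case False
  have no0: "\<not> (is_walk V E xs \<and> hd xs = x \<and> last xs = y \<and> length xs = Suc 0)" for xs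
    using walk1[of xs] False by auto
  show ?thesis
  proof (cases "E x y")
    case True
    have w: "is_walk V E [x, y]" using xy True by (simp add: is_walk_def less_Suc_eq)
    have "(LEAST n. \<exists>xs. is_walk V E xs \<and> hd xs = x \<and> last xs = y \<and> length xs = Suc n) = 1"
    proof (rule Least_equality)
      show "\<exists>xs. is_walk V E xs \<and> hd xs = x \<and> last xs = y \<and> length xs = Suc 1"
        using w by (intro exI[of _ "[x,y]"]) auto
    next
      fix m assume "\<exists>xs. is_walk V E xs \<and> hd xs = x \<and> last xs = y \<and> length xs = Suc m"
      then show "1 \<le> m" using no0 by (cases m) auto
    qed
    then show ?thesis unfolding gdist_def dd_def using True False by simp
  next
    case nE: False
    obtain z where z: "E x z" "E z y" using cn xy False nE by blast
    have zV: "z \<in> V" using sg z unfolding simple_graph_def by blast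
    have w: "is_walk V E [x, z, y]" using xy z zV
      by (auto simp: is_walk_def less_Suc_eq nth_Cons split: nat.splits)
    have "(LEAST n. \<exists>xs. is_walk V E xs \<and> hd xs = x \<and> last xs = y \<and> length xs = Suc n) = 2"
    proof (rule Least_equality)
      show "\<exists>xs. is_walk V E xs \<and> hd xs = x \<and> last xs = y \<and> length xs = Suc 2"
        using w by (intro exI[of _ "[x,z,y]"]) auto
    next
      fix m assume a: "\<exists>xs. is_walk V E xs \<and> hd xs = x \<and> last xs = y \<and> length xs = Suc m"
      show "2 \<le> m"
      proof (rule ccontr)
        assume "\<not> 2 \<le> m"
        then have "m = 0 \<or> m = 1" by auto
        then show False
        proof
          assume "m = 0" then show False using a no0 by auto
        next
          assume "m = 1" then show False using a walk2[of V E] nE by fastforce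
        qed
      qed
    qed
    then show ?thesis unfolding gdist_def dd_def using nE False by simp
  qed
qed

definition res :: "'a set \<Rightarrow> ('a \<Rightarrow> 'a \<Rightarrow> bool) \<Rightarrow> 'a set \<Rightarrow> bool" where
  "res V E R \<longleftrightarrow> R \<subseteq> V \<and> (\<forall>x\<in>V. \<forall>y\<in>V. x \<noteq> y \<longrightarrow> (\<exists>r\<in>R. dd E r x \<noteq> dd E r y))"

lemma resD: "res V E R \<Longrightarrow> x \<in> V \<Longrightarrow> y \<in> V \<Longrightarrow> x \<noteq> y \<Longrightarrow> \<exists>r\<in>R. dd E r x \<noteq> dd E r y"
  unfolding res_def by blast

definition sw :: "'a \<Rightarrow> 'a \<Rightarrow> 'a \<Rightarrow> 'a" where
  "sw a b x = (if x = a then b else if x = b then a else x)"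

lemma four_cases:
  assumes "(a::nat) < 4" obtains "a = 0" | "a = 1" | "a = 2" | "a = 3"
  using assms by linarith
lemma c4_irr0: "(a::nat) < 4 \<Longrightarrow> C4_edges a a \<Longrightarrow> False"
  by (erule four_cases) (simp_all add: C4_edges_def)
lemma c4_irr: "\<not> C4_edges a a"
  using c4_irr0[of a] by (auto simp: C4_edges_def)
lemma c4_arith0:
  "(a::nat) < 4 \<Longrightarrow> (b::nat) < 4 \<Longrightarrow> a \<noteq> b \<Longrightarrow> b \<noteq> (a + 2) mod 4 \<Longrightarrow>
   C4_edges a b \<and> C4_edges ((a + 2) mod 4) b"
  by (erule four_cases; erule four_cases; simp add: C4_edges_def)
lemma c4_opp: "(a::nat) < 4 \<Longrightarrow> \<not> C4_edges a ((a + 2) mod 4)"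
  by (erule four_cases) (simp_all add: C4_edges_def)

lemma mod2ne: "(a::nat) < 4 \<Longrightarrow> (a + 2) mod 4 \<noteq> a"
  by (erule four_cases) simp_all

lemma dd_twin:
  assumes sym: "\<forall>x y. E x y \<longrightarrow> E y x"
    and tw: "\<forall>z. z \<noteq> a \<longrightarrow> z \<noteq> b \<longrightarrow> (E a z \<longleftrightarrow> E b z)"
    and xa: "x \<noteq> a" and xb: "x \<noteq> b"
  shows "dd E a x = dd E b x" "dd E x a = dd E x b"
proof -
  have e: "E a x \<longleftrightarrow> E b x" using tw xa xb by blast
  have e2: "E x a \<longleftrightarrow> E x b" using e sym by blast
  show "dd E a x = dd E b x" using e xa xb unfolding dd_def by simp
  show "dd E x a = dd E x b" using e2 xa xb unfolding dd_def by simp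
qed

lemma dd_swap:
  assumes sym: "\<forall>x y. E x y \<longrightarrow> E y x" and irr: "\<forall>x. \<not> E x x"
    and ab: "E a b"
    and tw: "\<forall>z. z \<noteq> a \<longrightarrow> z \<noteq> b \<longrightarrow> (E a z \<longleftrightarrow> E b z)"
  shows "dd E (sw a b r) (sw a b x) = dd E r x"
proof -
  have ba: "E b a" using ab sym by blast
  have anb: "a \<noteq> b" using ab irr by blast
  have ha: "E a z = E b z" if "z \<noteq> a" "z \<noteq> b" for z using tw that by blast
  have hb: "E z a = E z b" if "z \<noteq> a" "z \<noteq> b" for z using ha[OF that] sym by blast
  show ?thesis unfolding dd_def sw_def
    using ab ba anb ha hb by (cases "r = a"; cases "r = b"; cases "x = a"; cases "x = b"; simp)
qed

theorem lemma8:
  fixes V :: "'a set" and E :: "'a \<Rightarrow> 'a \<Rightarrow> bool" and C :: "'a set"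
  assumes "simple_graph V E"
    and "connected_graph V E"
    and "card V \<ge> 5"
    and "component V (compl_edges V E) C"
    and "graph_iso C (induced (compl_edges V E) C) {0..<4} C4_edges"
  shows "\<forall>v\<in>C. \<not> basis_forced V E v"
proof
  fix v assume vC: "v \<in> C"
  have sym: "\<forall>x y. E x y \<longrightarrow> E y x" and irr: "\<forall>x. \<not> E x x"
    and EV: "\<And>x y. E x y \<Longrightarrow> x \<in> V \<and> y \<in> V" and finV: "finite V"
    using assms(1) unfolding simple_graph_def by blast+
  have CV: "C \<subseteq> V" using assms(4) unfolding component_def by blast
  have finC: "finite C" using CV finV finite_subset by blast
  have out: "E x y" if "x \<in> C" "y \<in> V" "y \<notin> C" for x y
  proof -
    have "\<not> compl_edges V E x y" using assms(4) that unfolding component_def by blast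
    then show ?thesis using that CV by (auto simp: compl_edges_def)
  qed
  obtain f where f: "bij_betw f C {0..<4}"
    and fE: "\<forall>u\<in>C. \<forall>w\<in>C. induced (compl_edges V E) C u w \<longleftrightarrow> C4_edges (f u) (f w)"
    using assms(5) unfolding graph_iso_def by blast
  have cardC: "card C = 4" using bij_betw_same_card[OF f] by simp
  have inC: "E u w \<longleftrightarrow> u \<noteq> w \<and> \<not> C4_edges (f u) (f w)" if "u \<in> C" "w \<in> C" for u w
    using fE that CV irr c4_irr[of "f u"] by (auto simp: induced_def compl_edges_def)
  have finj: "inj_on f C" and fim: "f ` C = {0..<4}" using f by (auto simp: bij_betw_def)
  define tw where "tw u = inv_into C f ((f u + 2) mod 4)" for u
  have twC: "tw u \<in> C" and ftw: "f (tw u) = (f u + 2) mod 4" if "u \<in> C" for u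
  proof -
    have "(f u + 2) mod 4 \<in> f ` C" using fim by simp
    then show "tw u \<in> C" "f (tw u) = (f u + 2) mod 4" unfolding tw_def
      by (auto intro: inv_into_into f_inv_into_f)
  qed
  have fu4: "f u < 4" if "u \<in> C" for u using fim that by auto
  have twne: "tw u \<noteq> u" if "u \<in> C" for u
  proof
    assume "tw u = u"
    then have "(f u + 2) mod 4 = f u" using ftw[OF that] by simp
    then show False using mod2ne fu4 that by blast
  qed
  have Etw: "E u (tw u)" if "u \<in> C" for u
  proof -
    have "\<not> C4_edges (f u) (f (tw u))" using ftw[OF that] c4_opp fu4[OF that] by simp
    then show ?thesis using inC[OF that twC[OF that]] twne[OF that] by simp
  qed
  have nC: "\<not> E u z \<and> \<not> E (tw u) z" if "u \<in> C" "z \<in> C" "z \<noteq> u" "z \<noteq> tw u" for u z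
  proof -
    have "f z \<noteq> f u" "f z \<noteq> f (tw u)" using finj that twC[OF that(1)] by (auto dest: inj_onD)
    then have "C4_edges (f u) (f z) \<and> C4_edges (f (tw u)) (f z)"
      using c4_arith0[of "f u" "f z"] fu4 that ftw by auto
    then show ?thesis using inC that twC by auto
  qed
  have twin: "\<forall>z. z \<noteq> u \<longrightarrow> z \<noteq> tw u \<longrightarrow> (E u z \<longleftrightarrow> E (tw u) z)" if "u \<in> C" for u
  proof (intro allI impI)
    fix z assume z: "z \<noteq> u" "z \<noteq> tw u"
    show "E u z \<longleftrightarrow> E (tw u) z"
    proof (cases "z \<in> V")
      case False then show ?thesis using EV by blast
    next
      case True
      then show ?thesis using out[OF that] out[OF twC[OF that]] nC[OF that _ z] by blast
    qed
  qed
  obtain u0 where u0: "u0 \<in> V" "u0 \<notin> C"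
  proof -
    have "\<not> V \<subseteq> C"
    proof
      assume "V \<subseteq> C"
      then have "card V \<le> card C" using finC card_mono by blast
      then show False using assms(3) cardC by simp
    qed
    then show ?thesis using that by blast
  qed
  have cn: "\<forall>x\<in>V. \<forall>y\<in>V. x \<noteq> y \<longrightarrow> \<not> E x y \<longrightarrow> (\<exists>z. E x z \<and> E z y)"
  proof (intro ballI impI)
    fix x y assume xy: "x \<in> V" "y \<in> V" "x \<noteq> y" "\<not> E x y"
    show "\<exists>z. E x z \<and> E z y"
    proof (cases "x \<in> C")
      case True
      then have "y \<in> C" using out xy by blast
      then show ?thesis using out[OF True u0] out[OF \<open>y \<in> C\<close> u0] sym by blast
    next
      case False
      then have "y \<notin> C" using out xy sym by blast
      then show ?thesis using out[OF vC xy(1) False] out[OF vC xy(2)] sym by blast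
    qed
  qed
  have gd: "gdist V E x y = dd E x y" if "x \<in> V" "y \<in> V" for x y
    using gdist_char[OF assms(1) that cn] .
  have resiff: "resolving_set V E R \<longleftrightarrow> res V E R" for R
  proof -
    have "(\<exists>r\<in>R. gdist V E r x \<noteq> gdist V E r y) = (\<exists>r\<in>R. dd E r x \<noteq> dd E r y)"
      if "R \<subseteq> V" "x \<in> V" "y \<in> V" for x y
    proof -
      have "\<forall>r\<in>R. gdist V E r x = dd E r x \<and> gdist V E r y = dd E r y" using gd that by blast
      then show ?thesis by auto
    qed
    then show ?thesis unfolding resolving_set_def res_def by blast
  qed
  have "res V E V"
  proof -
    have "\<exists>r\<in>V. dd E r x \<noteq> dd E r y" if "x \<in> V" "y \<in> V" "x \<noteq> y" for x y
      using that by (intro bexI[of _ x]) (auto simp: dd_def)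
    then show ?thesis unfolding res_def by blast
  qed
  then have "\<exists>k R. resolving_set V E R \<and> card R = k" using resiff by blast
  then have "\<exists>R. resolving_set V E R \<and> card R = metric_dim V E"
    unfolding metric_dim_def by (rule LeastI_ex)
  then obtain R where R: "res V E R" "card R = metric_dim V E" using resiff by blast
  have RV: "R \<subseteq> V" using R unfolding res_def by blast
  have finR: "finite R" using RV finV finite_subset by blast
  have mb: "metric_basis V E R" using R resiff unfolding metric_basis_def by blast
  show "\<not> basis_forced V E v"
  proof (cases "v \<in> R")
    case False then show ?thesis using mb unfolding basis_forced_def by blast
  next
    case vR: True
    define v' where "v' = tw v"
    have v'C: "v' \<in> C" and vv': "v' \<noteq> v" "E v v'" and twv: "\<forall>z. z \<noteq> v \<longrightarrow> z \<noteq> v' \<longrightarrow> (E v z \<longleftrightarrow> E v' z)"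
      using twC[OF vC] twne[OF vC] Etw[OF vC] twin[OF vC] unfolding v'_def by auto
    have Ev'v: "E v' v" using vv'(2) sym by blast
    have v'R: "v' \<notin> R"
    proof
      assume v'R: "v' \<in> R"
      have "card (C - {v, v'}) = 2" using cardC finC vC v'C vv' by (simp add: card_Diff_subset)
      then have "C - {v, v'} \<noteq> {}" by (metis card.empty zero_neq_numeral)
      then obtain w where w: "w \<in> C" "w \<noteq> v" "w \<noteq> v'" by blast
      define w' where "w' = tw w"
      have w'C: "w' \<in> C" and ww': "w' \<noteq> w" "E w w'" and tww: "\<forall>z. z \<noteq> w \<longrightarrow> z \<noteq> w' \<longrightarrow> (E w z \<longleftrightarrow> E w' z)"
        unfolding w'_def using twC[OF w(1)] twne[OF w(1)] Etw[OF w(1)] twin[OF w(1)] by blast+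
      have tv: "tw v = v'" by (simp add: v'_def)
      have nvw: "\<not> E v w" "\<not> E v' w" using nC[OF vC w(1), unfolded tv] w by blast+
      have w'ne: "w' \<noteq> v" "w' \<noteq> v'"
      proof -
        have "E w' w" using ww'(2) sym by blast
        then show "w' \<noteq> v" "w' \<noteq> v'" using nvw by blast+
      qed
      have nvw': "\<not> E v w'" "\<not> E v' w'" using nC[OF vC w'C, unfolded tv] w'ne by blast+
      obtain r0 where r0: "r0 \<in> R" "r0 = w \<or> r0 = w'"
      proof -
        obtain r where r: "r \<in> R" "dd E r w \<noteq> dd E r w'"
          using resD[OF R(1), of w w'] w(1) w'C CV ww'(1) by blast
        have "r = w \<or> r = w'"
        proof (rule ccontr)
          assume "\<not> (r = w \<or> r = w')"
          then have "dd E r w = dd E r w'" using dd_twin(2)[OF sym tww] by blast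
          then show False using r(2) by simp
        qed
        then show ?thesis using that r by blast
      qed
      have r0C: "r0 \<in> C" using r0 w(1) w'C by blast
      have r0v: "r0 \<noteq> v" "\<not> E v r0" using r0(2) w(2) w'ne(1) nvw(1) nvw'(1) by blast+
      have "res V E (R - {v})"
        unfolding res_def
      proof (intro conjI ballI impI)
        show "R - {v} \<subseteq> V" using RV by blast
      next
        fix x y assume xy: "x \<in> V" "y \<in> V" "x \<noteq> y"
        obtain r where r: "r \<in> R" "dd E r x \<noteq> dd E r y" using resD[OF R(1) xy] by blast
        show "\<exists>r\<in>R - {v}. dd E r x \<noteq> dd E r y"
        proof (cases "r = v")
          case False then show ?thesis using r by blast
        next
          case rv: True
          have v'R': "v' \<in> R - {v}" using v'R vv' by blast
          have key: "\<exists>r\<in>R - {v}. dd E r v \<noteq> dd E r y" if "y \<in> V" "y \<noteq> v" for y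
          proof (cases "y = v'")
            case True
            have "dd E v' v \<noteq> dd E v' y" using True vv' by (simp add: dd_def)
            then show ?thesis using v'R' by blast
          next
            case yv': False
            show ?thesis
            proof (cases "E v y")
              case False
              then have "\<not> E v' y" using twv that yv' by blast
              have "dd E v' v \<noteq> dd E v' y" using \<open>\<not> E v' y\<close> vv' that yv' Ev'v by (simp add: dd_def)
              then show ?thesis using v'R' by blast
            next
              case True
              then have "y \<notin> C" using nC[OF vC _ that(2)] yv' unfolding v'_def by blast
              then have "E r0 y" using out[OF r0C that(1)] by blast
              moreover have "\<not> E r0 v" using r0v sym by blast
              ultimately have "dd E r0 v \<noteq> dd E r0 y" using r0v by (simp add: dd_def)
              moreover have "r0 \<in> R - {v}" using r0 r0v by blast
              ultimately show ?thesis by blast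
            qed
          qed
          show ?thesis
          proof (cases "x = v")
            case True then show ?thesis using key[OF xy(2)] xy(3) by simp
          next
            case xv: False
            show ?thesis
            proof (cases "y = v")
              case True
              then obtain r' where "r' \<in> R - {v}" "dd E r' v \<noteq> dd E r' x"
                using key[OF xy(1) xv] by blast
              then show ?thesis using True by (intro bexI[of _ r']) auto
            next
              case yv: False
              have "dd E v' x \<noteq> dd E v' y"
              proof (cases "x = v'")
                case True then show ?thesis using xy(3) by (simp add: dd_def)
              next
                case xv': False
                show ?thesis
                proof (cases "y = v'")
                  case True then show ?thesis using xy(3) by (simp add: dd_def)
                next
                  case False
                  then show ?thesis using dd_twin(1)[OF sym twv xv xv'] dd_twin(1)[OF sym twv yv False]
                    r(2) rv by simp
                qed
              qed
              then show ?thesis using v'R' by blast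
            qed
          qed
        qed
      qed
      then have "metric_dim V E \<le> card (R - {v})"
        using resiff unfolding metric_dim_def by (intro Least_le) blast
      moreover have "card (R - {v}) < card R" by (rule card_Diff1_less[OF finR vR])
      ultimately show False using R(2) by simp
    qed
    define R' where "R' = sw v v' ` R"
    have swV: "sw v v' x \<in> V" if "x \<in> V" for x using that CV vC v'C by (auto simp: sw_def)
    have swinv: "sw v v' (sw v v' x) = x" for x by (auto simp: sw_def)
    have "inj (sw v v')"
    proof (rule injI)
      fix x y assume "sw v v' x = sw v v' y"
      then have "sw v v' (sw v v' x) = sw v v' (sw v v' y)" by simp
      then show "x = y" by (simp only: swinv)
    qed
    then have cardR': "card R' = card R" unfolding R'_def by (simp add: card_image inj_on_subset)
    have vR': "v \<notin> R'" using v'R unfolding R'_def sw_def by auto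
    have "res V E R'" unfolding res_def
    proof (intro conjI ballI impI)
      show "R' \<subseteq> V" using RV swV unfolding R'_def by blast
    next
      fix x y assume xy: "x \<in> V" "y \<in> V" "x \<noteq> y"
      have "sw v v' x \<noteq> sw v v' y"
      proof
        assume "sw v v' x = sw v v' y"
        then have "sw v v' (sw v v' x) = sw v v' (sw v v' y)" by simp
        then show False using xy(3) by (simp only: swinv)
      qed
      then obtain r where r: "r \<in> R" "dd E r (sw v v' x) \<noteq> dd E r (sw v v' y)"
        using R(1) swV xy unfolding res_def by blast
      have "dd E (sw v v' r) x \<noteq> dd E (sw v v' r) y"
        using r dd_swap[OF sym irr vv'(2) twv, of r "sw v v' x"] dd_swap[OF sym irr vv'(2) twv, of r "sw v v' y"]
        by (simp add: swinv)
      then show "\<exists>r\<in>R'. dd E r x \<noteq> dd E r y" using r(1) unfolding R'_def by blast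
    qed
    then have "metric_basis V E R'" using resiff cardR' R(2) unfolding metric_basis_def by simp
    then show ?thesis using vR' unfolding basis_forced_def by blast
  qed
qed

end
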